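(* Let $\mathcal{M}=\langle M,\circ,e\rangle$ be an mge monoid. Then for every $n\ge1$, every equalizable tuple $\langle m_1,\dots,m_n\rangle\in M^n$ has an mge.
   Context: In a monoid $\langle M,\circ,e\rangle$, a tuple $\langle m_1,\dots,m_n\rangle\in M^n$ is equalizable if there is $\langle x_1,\dots,x_n\rangle\in M^n$ (an equalizer) with $m_1x_1=\dots=m_nx_n$; an equalizer is a most general equalizer (mge) if every equalizer has the form $\langle x_1x,\dots,x_nx\rangle$ for some $x\in M$. An mge monoid is a monoid with right cancellation ($ac=bc\Rightarrow a=b$) in which every equalizable pair has an mge. *)

theory Defs
  imports Main
begin

text \<open>Tuples in M^n are represented as functions nat => M, indexed by 0..n-1
  (only the values at indices i < n matter). The monoid is the type-class
  monoid_mult: composition (*), neutral element 1.\<close>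

definition equalizer :: "nat \<Rightarrow> (nat \<Rightarrow> 'a::monoid_mult) \<Rightarrow> (nat \<Rightarrow> 'a) \<Rightarrow> bool" where
  "equalizer n m x \<longleftrightarrow> (\<forall>i<n. \<forall>j<n. m i * x i = m j * x j)"

definition equalizable :: "nat \<Rightarrow> (nat \<Rightarrow> 'a::monoid_mult) \<Rightarrow> bool" where
  "equalizable n m \<longleftrightarrow> (\<exists>x. equalizer n m x)"

definition is_mge :: "nat \<Rightarrow> (nat \<Rightarrow> 'a::monoid_mult) \<Rightarrow> (nat \<Rightarrow> 'a) \<Rightarrow> bool" where
  "is_mge n m x \<longleftrightarrow> equalizer n m x \<and>
     (\<forall>y. equalizer n m y \<longrightarrow> (\<exists>z. \<forall>i<n. y i = x i * z))"

definition right_cancellative :: "'a::monoid_mult itself \<Rightarrow> bool" where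
  "right_cancellative _ \<longleftrightarrow> (\<forall>a b c :: 'a. a * c = b * c \<longrightarrow> a = b)"

definition mge_monoid :: "'a::monoid_mult itself \<Rightarrow> bool" where
  "mge_monoid T \<longleftrightarrow> right_cancellative T \<and>
     (\<forall>m :: nat \<Rightarrow> 'a. equalizable 2 m \<longrightarrow> (\<exists>x. is_mge 2 m x))"

end

theory Submission
  imports Defs
begin

lemma eq2: "equalizer 2 m w \<longleftrightarrow> m 0 * w 0 = m 1 * w 1"
  unfolding equalizer_def
  by (auto simp: less_2_cases_iff)

lemma main:
  assumes mg: "mge_monoid TYPE('a::monoid_mult)"
  shows "equalizable (Suc k) (m :: nat \<Rightarrow> 'a) \<Longrightarrow> \<exists>x. is_mge (Suc k) m x"
proof (induction k)
  case 0
  show ?case unfolding is_mge_def equalizer_def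
    by (rule exI[of _ "\<lambda>_. 1"]) auto
next
  case (Suc k)
  from Suc.prems obtain y0 where y0: "equalizer (Suc (Suc k)) m y0"
    unfolding equalizable_def by blast
  have "equalizable (Suc k) m" using y0 unfolding equalizable_def equalizer_def
    by (metis less_SucI)
  with Suc.IH obtain x where x: "is_mge (Suc k) m x" by blast
  define a where "a = m 0 * x 0"
  have xa: "\<And>i. i < Suc k \<Longrightarrow> m i * x i = a"
    using x unfolding is_mge_def equalizer_def a_def by blast
  define p :: "nat \<Rightarrow> 'a" where "p = (\<lambda>i. if i = 0 then a else m (Suc k))"
  have gen: "\<And>y. equalizer (Suc (Suc k)) m y \<Longrightarrow> \<exists>z. (\<forall>i<Suc k. y i = x i * z) \<and> equalizer 2 p (\<lambda>i. if i = 0 then z else y (Suc k))"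
  proof -
    fix y assume y: "equalizer (Suc (Suc k)) m y"
    have "equalizer (Suc k) m y" using y unfolding equalizer_def by (metis less_SucI)
    then obtain z where z: "\<forall>i<Suc k. y i = x i * z" using x unfolding is_mge_def by blast
    have "m (Suc k) * y (Suc k) = m 0 * y 0" using y unfolding equalizer_def by blast
    also have "\<dots> = a * z" using z by (simp add: a_def mult.assoc)
    finally show "\<exists>z. (\<forall>i<Suc k. y i = x i * z) \<and> equalizer 2 p (\<lambda>i. if i = 0 then z else y (Suc k))"
      using z by (intro exI[of _ z]) (simp add: eq2 p_def)
  qed
  obtain z0 where "equalizer 2 p (\<lambda>i. if i = 0 then z0 else y0 (Suc k))"
    using gen[OF y0] by blast
  hence "equalizable 2 p" unfolding equalizable_def by blast
  then obtain w where w: "is_mge 2 p w" using mg unfolding mge_monoid_def by blast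
  have wa: "a * w 0 = m (Suc k) * w 1" using w unfolding is_mge_def eq2 p_def by simp
  define x' where "x' = (\<lambda>i. if i < Suc k then x i * w 0 else w 1)"
  have eqx': "equalizer (Suc (Suc k)) m x'"
  proof -
    have "\<And>i. i < Suc (Suc k) \<Longrightarrow> m i * x' i = a * w 0"
    proof -
      fix i assume "i < Suc (Suc k)"
      then consider "i < Suc k" | "i = Suc k" by linarith
      then show "m i * x' i = a * w 0"
        by cases (auto simp: x'_def wa xa mult.assoc[symmetric])
    qed
    then show ?thesis unfolding equalizer_def by simp
  qed
  show ?case unfolding is_mge_def
  proof (intro exI[of _ x'] conjI allI impI)
    show "equalizer (Suc (Suc k)) m x'" by (rule eqx')
    fix y assume y: "equalizer (Suc (Suc k)) m y"
    obtain z where z: "\<forall>i<Suc k. y i = x i * z"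
      and e: "equalizer 2 p (\<lambda>i. if i = 0 then z else y (Suc k))" using gen[OF y] by blast
    obtain v where v: "\<forall>i<2. (\<lambda>i. if i = 0 then z else y (Suc k)) i = w i * v"
      using w e unfolding is_mge_def by blast
    have v0: "z = w 0 * v" using v[rule_format, of 0] by simp
    have v1: "y (Suc k) = w 1 * v" using v[rule_format, of 1] by simp
    show "\<exists>z. \<forall>i<Suc (Suc k). y i = x' i * z"
    proof (intro exI[of _ v] allI impI)
      fix i assume "i < Suc (Suc k)"
      then consider "i < Suc k" | "i = Suc k" by linarith
      then show "y i = x' i * v"
        by cases (auto simp: x'_def z v0 v1 mult.assoc)
    qed
  qed
qed

theorem lemma5:
  assumes "mge_monoid TYPE('a::monoid_mult)"
    and "n \<ge> 1"
    and "equalizable n (m :: nat \<Rightarrow> 'a)"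
  shows "\<exists>x. is_mge n m x"
proof -
  obtain k where "n = Suc k" using assms(2) by (cases n) auto
  then show ?thesis using main[OF assms(1)] assms(3) by blast
qed

end
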